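(* Let $H$ be a simple hypergraph with $s=e(H)$ edges and fractional cover number $\rho^*=\rho^*(H)$. If $\rho^*<s$, then there is a constant $c=c(H)$ such that $\mathcal{E}_H(k)\leq c\,k^{(s-1)/(s-\rho^* )}$ for all positive integers $k$.
   Context: A fractional cover of a hypergraph $H$ is a function $\phi:E(H)\to[0,1]$ with $\sum_{e\ni v}\phi(e)\geq 1$ for every $v\in V(H)$; $\rho^*(H)$ is the minimum of $\sum_{e\in E(H)}\phi(e)$ over fractional covers. For hypergraphs $G,H$, $\operatorname{ex}(G,H)$ is the maximum number of edges of a subhypergraph of $G$ containing no copy of $H$, and $\mathcal{E}_H(k):=\sup\{e(G): G\text{ a simple hypergraph with }\operatorname{ex}(G,H)<k\}$. Hypergraphs have no isolated vertices. *)

theory Defs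
  imports "HOL-Analysis.Analysis" "HOL-Library.Extended_Real"
begin

text \<open>A hypergraph is represented by its set of edges; since hypergraphs have no
  isolated vertices, the vertex set is the union of the edges. Representing edges
  as a set of sets makes the hypergraph simple (no repeated edges).\<close>

definition hypergraph :: "'a set set \<Rightarrow> bool" where
  "hypergraph E \<longleftrightarrow> finite E \<and> (\<forall>e\<in>E. finite e \<and> e \<noteq> {})"

definition hvertices :: "'a set set \<Rightarrow> 'a set" where
  "hvertices E = \<Union>E"

definition has_copy :: "'b set set \<Rightarrow> 'a set set \<Rightarrow> bool" where
  "has_copy H G \<longleftrightarrow> (\<exists>f. inj_on f (hvertices H) \<and> (\<forall>e\<in>H. f ` e \<in> G))"

definition ex_hyp :: "'a set set \<Rightarrow> 'b set set \<Rightarrow> nat" where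
  "ex_hyp G H = Max {card F | F. F \<subseteq> G \<and> \<not> has_copy H F}"

definition fractional_cover :: "'a set set \<Rightarrow> ('a set \<Rightarrow> real) \<Rightarrow> bool" where
  "fractional_cover H \<phi> \<longleftrightarrow>
     (\<forall>e\<in>H. 0 \<le> \<phi> e \<and> \<phi> e \<le> 1) \<and>
     (\<forall>v\<in>hvertices H. (\<Sum>e\<in>{e\<in>H. v \<in> e}. \<phi> e) \<ge> 1)"

definition frac_cover_number :: "'a set set \<Rightarrow> real" where
  "frac_cover_number H = Inf {(\<Sum>e\<in>H. \<phi> e) | \<phi>. fractional_cover H \<phi>}"

text \<open>\<open>\<E>_H(k)\<close>: supremum of e(G) over finite simple hypergraphs G with ex(G,H) < k.
  Host hypergraphs are taken on vertex type nat (every finite hypergraph can be relabelled).\<close>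
definition extremal_E :: "'b set set \<Rightarrow> nat \<Rightarrow> ereal" where
  "extremal_E H k = Sup {ereal (card G) | G :: nat set set. hypergraph G \<and> ex_hyp G H < k}"

end

theory Submission
  imports Defs
begin


lemma wamgm:
  fixes x p :: "'a \<Rightarrow> real"
  assumes "finite S" "S \<noteq> {}" "\<And>i. i \<in> S \<Longrightarrow> x i \<ge> 0" "\<And>i. i \<in> S \<Longrightarrow> p i \<ge> 0"
    "sum p S = 1"
  shows "(\<Prod>i\<in>S. x i powr p i) \<le> (\<Sum>i\<in>S. p i * x i)"
proof (cases "\<exists>i\<in>S. x i = 0")
  case True
  then have "(\<Prod>i\<in>S. x i powr p i) = 0" using assms(1) by (metis powr_0 prod_zero_iff)
  moreover have "(\<Sum>i\<in>S. p i * x i) \<ge> 0" by (simp add: assms sum_nonneg)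
  ultimately show ?thesis by simp
next
  case False
  then have pos: "\<And>i. i\<in>S \<Longrightarrow> x i > 0" using assms(3) by fastforce
  have "ln (\<Sum>i \<in> S. p i *\<^sub>R x i) \<ge> (\<Sum>i \<in> S. p i * ln (x i))"
    by (intro concave_on_sum[OF assms(1,2) ln_concave]) (use assms pos in auto)
  moreover have sp: "(\<Sum>i \<in> S. p i *\<^sub>R x i) > 0"
  proof -
    obtain j where "j\<in>S" "p j > 0" using assms(5) assms(4)
      by (metis less_eq_real_def sum.neutral zero_neq_one)
    then have "0 < p j * x j" using pos by simp
    also have "\<dots> \<le> (\<Sum>i \<in> S. p i * x i)"
      by (rule member_le_sum) (use assms pos \<open>j\<in>S\<close> in \<open>auto intro: mult_nonneg_nonneg less_imp_le\<close>)
    finally show ?thesis by simp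
  qed
  ultimately have "exp (\<Sum>i \<in> S. p i * ln (x i)) \<le> (\<Sum>i \<in> S. p i *\<^sub>R x i)"
    by (metis exp_le_cancel_iff exp_ln)
  moreover have "exp (\<Sum>i \<in> S. p i * ln (x i)) = (\<Prod>i\<in>S. x i powr p i)"
    unfolding exp_sum[OF assms(1)]
  proof (rule prod.cong)
    fix i assume "i \<in> S"
    then have "x i > 0" by (rule pos)
    then show "exp (p i * ln (x i)) = x i powr p i" by (simp add: powr_def mult.commute)
  qed simp
  ultimately show ?thesis by simp
qed

lemma holder_sum:
  fixes a :: "'j \<Rightarrow> 'u \<Rightarrow> real" and w :: "'j \<Rightarrow> real"
  assumes fJ: "finite J" and fU: "finite U" and wpos: "\<And>j. j\<in>J \<Longrightarrow> w j > 0"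
    and wsum: "sum w J \<ge> 1" and anon: "\<And>j y. j\<in>J \<Longrightarrow> y\<in>U \<Longrightarrow> a j y \<ge> 0"
  shows "(\<Sum>y\<in>U. \<Prod>j\<in>J. a j y powr w j) \<le> (\<Prod>j\<in>J. (\<Sum>y\<in>U. a j y) powr w j)"
proof (cases "\<exists>j\<in>J. (\<Sum>y\<in>U. a j y) = 0")
  case True
  then obtain j where j: "j\<in>J" "(\<Sum>y\<in>U. a j y) = 0" by blast
  then have z: "\<And>y. y\<in>U \<Longrightarrow> a j y = 0" using sum_nonneg_eq_0_iff[OF fU] anon by blast
  have "(\<Sum>y\<in>U. \<Prod>j\<in>J. a j y powr w j) = 0"
  proof (rule sum.neutral, intro ballI)
    fix y assume "y\<in>U"
    then have "a j y powr w j = 0" using z by simp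
    then show "(\<Prod>j\<in>J. a j y powr w j) = 0" using j fJ by (metis prod_zero_iff)
  qed
  moreover have "0 \<le> (\<Prod>j\<in>J. (\<Sum>y\<in>U. a j y) powr w j)" by (simp add: prod_nonneg)
  ultimately show ?thesis by simp
next
  case False
  define A where "A j = (\<Sum>y\<in>U. a j y)" for j
  have Apos: "A j > 0" if "j\<in>J" for j
    using False that anon unfolding A_def by (metis less_eq_real_def sum_nonneg)
  define W where "W = sum w J"
  have Wpos: "W \<ge> 1" using wsum W_def by simp
  define p where "p j = w j / W" for j
  define b where "b j y = a j y / A j" for j y
  have b01: "0 \<le> b j y \<and> b j y \<le> 1" if "j\<in>J" "y\<in>U" for j y
  proof -
    have "a j y \<le> A j" unfolding A_def by (rule member_le_sum) (use anon that fU in auto)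
    then show ?thesis unfolding b_def using Apos[OF that(1)] anon[OF that] by simp
  qed
  have Jne: "J \<noteq> {}" using wsum by auto
  have psum: "sum p J = 1" unfolding p_def W_def using Wpos W_def
    by (simp add: sum_divide_distrib[symmetric])
  define P where "P = (\<Prod>j\<in>J. A j powr w j)"
  have Pnn: "P \<ge> 0" unfolding P_def by (simp add: prod_nonneg)
  have pt: "(\<Prod>j\<in>J. a j y powr w j) \<le> P * (\<Sum>j\<in>J. p j * b j y)" if y: "y\<in>U" for y
  proof -
    have "(\<Prod>j\<in>J. a j y powr w j) = (\<Prod>j\<in>J. A j powr w j * b j y powr w j)"
    proof (rule prod.cong[OF refl])
      fix j assume "j\<in>J"
      then have "a j y = A j * b j y" unfolding b_def using Apos[OF \<open>j\<in>J\<close>] by simp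
      then show "a j y powr w j = A j powr w j * b j y powr w j"
        using powr_mult Apos[OF \<open>j\<in>J\<close>] b01[OF \<open>j\<in>J\<close> y] by simp
    qed
    also have "\<dots> = P * (\<Prod>j\<in>J. b j y powr w j)" unfolding P_def by (simp add: prod.distrib)
    also have "\<dots> \<le> P * (\<Prod>j\<in>J. b j y powr p j)"
    proof (rule mult_left_mono[OF _ Pnn], rule prod_mono, intro conjI)
      fix j assume j: "j\<in>J"
      show "0 \<le> b j y powr w j" by simp
      have "p j \<le> w j" unfolding p_def using wpos[OF j] Wpos
        by (simp add: divide_le_eq mult_le_cancel_left1 less_imp_le)
      then show "b j y powr w j \<le> b j y powr p j"
        by (rule powr_mono') (use b01[OF j y] in auto)
    qed
    also have "\<dots> \<le> P * (\<Sum>j\<in>J. p j * b j y)"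
      by (rule mult_left_mono[OF _ Pnn], rule wamgm[OF fJ Jne])
        (use b01 y psum wpos Wpos in \<open>auto simp: p_def less_imp_le\<close>)
    finally show ?thesis .
  qed
  have "(\<Sum>y\<in>U. \<Prod>j\<in>J. a j y powr w j) \<le> (\<Sum>y\<in>U. P * (\<Sum>j\<in>J. p j * b j y))"
    by (rule sum_mono) (rule pt)
  also have "\<dots> = P * (\<Sum>j\<in>J. p j * (\<Sum>y\<in>U. b j y))"
    by (simp add: sum_distrib_left sum.swap[of _ U J])
  also have "\<dots> = P * (\<Sum>j\<in>J. p j)"
  proof -
    have "(\<Sum>y\<in>U. b j y) = 1" if "j\<in>J" for j
      unfolding b_def using Apos[OF that] by (simp add: sum_divide_distrib[symmetric] A_def)
    then show ?thesis by simp
  qed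
  also have "\<dots> = P" using psum by simp
  finally show ?thesis unfolding P_def A_def .
qed

lemma sum_PiE_insert:
  assumes "v \<notin> A"
  shows "(\<Sum>x\<in>PiE (insert v A) (\<lambda>_. U). h x) = (\<Sum>x\<in>PiE A (\<lambda>_. U). \<Sum>y\<in>U. h (x(v:=y)))"
proof -
  have "(\<Sum>x\<in>PiE (insert v A) (\<lambda>_. U). h x) = (\<Sum>z\<in>U \<times> PiE A (\<lambda>_. U). h ((\<lambda>(y, g). g(v := y)) z))"
    unfolding PiE_insert_eq by (rule sum.reindex[OF inj_combinator[OF assms], unfolded comp_def])
  also have "\<dots> = (\<Sum>y\<in>U. \<Sum>x\<in>PiE A (\<lambda>_. U). h (x(v:=y)))"
    by (simp add: sum.cartesian_product split_def)
  also have "\<dots> = (\<Sum>x\<in>PiE A (\<lambda>_. U). \<Sum>y\<in>U. h (x(v:=y)))"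
    by (rule sum.swap)
  finally show ?thesis .
qed

lemma finner:
  fixes E :: "'i \<Rightarrow> 'v set" and g :: "'i \<Rightarrow> ('v \<Rightarrow> 'u) \<Rightarrow> real" and w :: "'i \<Rightarrow> real"
  assumes "finite V" "finite U" "finite I"
   and "\<And>i. i\<in>I \<Longrightarrow> E i \<subseteq> V" "\<And>i. i\<in>I \<Longrightarrow> w i > 0"
   and "\<And>v. v\<in>V \<Longrightarrow> sum w {i\<in>I. v\<in>E i} \<ge> 1"
   and "\<And>i x. i\<in>I \<Longrightarrow> g i x \<ge> 0"
   and "\<And>i x. i\<in>I \<Longrightarrow> g i x = g i (restrict x (E i))"
  shows "(\<Sum>x\<in>PiE V (\<lambda>_. U). \<Prod>i\<in>I. g i x powr w i)
           \<le> (\<Prod>i\<in>I. (\<Sum>x\<in>PiE (E i) (\<lambda>_. U). g i x) powr w i)"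
  using assms(1,4,6,7,8)
proof (induction V arbitrary: E g rule: finite_induct)
  case empty
  then have "E i = {}" if "i\<in>I" for i using that by blast
  then show ?case by (auto intro!: prod.cong)
next
  case (insert v V E g)
  note fU = assms(2) and fI = assms(3) and wpos = assms(5)
  define E' where "E' i = E i - {v}" for i
  define g' where "g' i x = (if v \<in> E i then (\<Sum>y\<in>U. g i (x(v:=y))) else g i x)" for i x
  have rs: "restrict ((restrict x (E i - {v}))(v:=y)) (E i) = restrict (x(v:=y)) (E i)" for x y i
    by (auto simp: restrict_def)
  have rs2: "restrict (x(v:=y)) (E i) = restrict x (E i)" if "v \<notin> E i" for x y i
    using that by (auto simp: restrict_def)
  have IH: "(\<Sum>x\<in>PiE V (\<lambda>_. U). \<Prod>i\<in>I. g' i x powr w i)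
           \<le> (\<Prod>i\<in>I. (\<Sum>x\<in>PiE (E' i) (\<lambda>_. U). g' i x) powr w i)"
  proof (rule insert.IH)
    show "E' i \<subseteq> V" if "i\<in>I" for i using insert.prems(1)[OF that] unfolding E'_def by auto
    show "1 \<le> sum w {i \<in> I. u \<in> E' i}" if "u\<in>V" for u
    proof -
      have "{i \<in> I. u \<in> E' i} = {i \<in> I. u \<in> E i}" using that insert.hyps(2) unfolding E'_def by auto
      then show ?thesis using insert.prems(2)[of u] that by simp
    qed
    show "0 \<le> g' i x" if "i\<in>I" for i x
      unfolding g'_def using insert.prems(3)[OF that] by (simp add: sum_nonneg)
    show "g' i x = g' i (restrict x (E' i))" if i: "i\<in>I" for i x
    proof (cases "v \<in> E i")
      case True
      have "g' i (restrict x (E' i)) = (\<Sum>y\<in>U. g i (restrict ((restrict x (E i - {v}))(v:=y)) (E i)))"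
        unfolding g'_def E'_def using True insert.prems(4)[OF i] by simp
      also have "\<dots> = (\<Sum>y\<in>U. g i (x(v:=y)))" unfolding rs by (rule sum.cong[OF refl]) (rule insert.prems(4)[OF i, symmetric])
      finally show ?thesis unfolding g'_def using True by simp
    next
      case False
      then have "E' i = E i" unfolding E'_def by auto
      then show ?thesis unfolding g'_def using False insert.prems(4)[OF i, of x] by (simp add: restrict_def)
    qed
  qed
  define Iv where "Iv = I \<inter> {i. v \<in> E i}"
  have ID: "I - Iv = I - {i. v \<in> E i}" by (auto simp: Iv_def)
  have pt: "(\<Sum>y\<in>U. \<Prod>i\<in>I. g i (x(v:=y)) powr w i) \<le> (\<Prod>i\<in>I. g' i x powr w i)" for x
  proof -
    have same: "g i (x(v:=y)) = g i x" if "i \<in> I - Iv" for i y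
    proof -
      have "v \<notin> E i" "i\<in>I" using that unfolding Iv_def by auto
      have "g i (x(v:=y)) = g i (restrict (x(v:=y)) (E i))" by (rule insert.prems(4)[OF \<open>i\<in>I\<close>])
      also have "\<dots> = g i (restrict x (E i))" by (rule arg_cong[where f="g i"], rule rs2[OF \<open>v \<notin> E i\<close>])
      also have "\<dots> = g i x" by (rule insert.prems(4)[OF \<open>i\<in>I\<close>, symmetric])
      finally show ?thesis .
    qed
    have "(\<Sum>y\<in>U. \<Prod>i\<in>I. g i (x(v:=y)) powr w i)
        = (\<Sum>y\<in>U. (\<Prod>i\<in>Iv. g i (x(v:=y)) powr w i) * (\<Prod>i\<in>I - Iv. g i x powr w i))"
    proof (rule sum.cong[OF refl])
      fix y
      have "(\<Prod>i\<in>I. g i (x(v:=y)) powr w i) = (\<Prod>i\<in>Iv. g i (x(v:=y)) powr w i) * (\<Prod>i\<in>I - Iv. g i (x(v:=y)) powr w i)"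
        unfolding ID unfolding Iv_def by (rule prod.Int_Diff[OF fI])
      also have "(\<Prod>i\<in>I - Iv. g i (x(v:=y)) powr w i) = (\<Prod>i\<in>I - Iv. g i x powr w i)"
        by (rule prod.cong) (use same in auto)
      finally show "(\<Prod>i\<in>I. g i (x(v:=y)) powr w i) = (\<Prod>i\<in>Iv. g i (x(v:=y)) powr w i) * (\<Prod>i\<in>I - Iv. g i x powr w i)" .
    qed
    also have "\<dots> = (\<Sum>y\<in>U. \<Prod>i\<in>Iv. g i (x(v:=y)) powr w i) * (\<Prod>i\<in>I - Iv. g i x powr w i)"
      by (simp add: sum_distrib_right)
    also have "\<dots> \<le> (\<Prod>i\<in>Iv. (\<Sum>y\<in>U. g i (x(v:=y))) powr w i) * (\<Prod>i\<in>I - Iv. g i x powr w i)"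
    proof (rule mult_right_mono)
      show "0 \<le> (\<Prod>i\<in>I - Iv. g i x powr w i)" by (simp add: prod_nonneg)
      show "(\<Sum>y\<in>U. \<Prod>i\<in>Iv. g i (x(v:=y)) powr w i) \<le> (\<Prod>i\<in>Iv. (\<Sum>y\<in>U. g i (x(v:=y))) powr w i)"
      proof (rule holder_sum)
        show "finite Iv" unfolding Iv_def using fI by simp
        have "Iv = {i\<in>I. v \<in> E i}" unfolding Iv_def by auto
        then show "1 \<le> sum w Iv" using insert.prems(2)[of v] by simp
        show "finite U" by (rule fU)
        show "\<And>j. j\<in>Iv \<Longrightarrow> 0 < w j" using wpos by (auto simp: Iv_def)
        show "\<And>j y. j\<in>Iv \<Longrightarrow> y\<in>U \<Longrightarrow> 0 \<le> g j (x(v:=y))" using insert.prems(3) by (auto simp: Iv_def)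
      qed
    qed
    also have "\<dots> = (\<Prod>i\<in>Iv. g' i x powr w i) * (\<Prod>i\<in>I - Iv. g' i x powr w i)"
    proof -
      have "(\<Prod>i\<in>Iv. (\<Sum>y\<in>U. g i (x(v:=y))) powr w i) = (\<Prod>i\<in>Iv. g' i x powr w i)"
        by (rule prod.cong[OF refl]) (simp add: g'_def Iv_def)
      moreover have "(\<Prod>i\<in>I - Iv. g i x powr w i) = (\<Prod>i\<in>I - Iv. g' i x powr w i)"
        by (rule prod.cong[OF refl]) (simp add: g'_def Iv_def)
      ultimately show ?thesis by simp
    qed
    also have "\<dots> = (\<Prod>i\<in>I. g' i x powr w i)"
      unfolding ID unfolding Iv_def by (rule prod.Int_Diff[OF fI, symmetric])
    finally show ?thesis .
  qed
  have "(\<Sum>x\<in>PiE (insert v V) (\<lambda>_. U). \<Prod>i\<in>I. g i x powr w i)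
      = (\<Sum>x\<in>PiE V (\<lambda>_. U). \<Sum>y\<in>U. \<Prod>i\<in>I. g i (x(v:=y)) powr w i)"
    by (rule sum_PiE_insert[OF insert.hyps(2)])
  also have "\<dots> \<le> (\<Sum>x\<in>PiE V (\<lambda>_. U). \<Prod>i\<in>I. g' i x powr w i)"
    by (rule sum_mono) (rule pt)
  also have "\<dots> \<le> (\<Prod>i\<in>I. (\<Sum>x\<in>PiE (E' i) (\<lambda>_. U). g' i x) powr w i)" by (rule IH)
  also have "\<dots> = (\<Prod>i\<in>I. (\<Sum>x\<in>PiE (E i) (\<lambda>_. U). g i x) powr w i)"
  proof (rule prod.cong[OF refl])
    fix i assume i: "i\<in>I"
    show "(\<Sum>x\<in>PiE (E' i) (\<lambda>_. U). g' i x) powr w i = (\<Sum>x\<in>PiE (E i) (\<lambda>_. U). g i x) powr w i"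
    proof (cases "v \<in> E i")
      case True
      then have "E i = insert v (E' i)" "v \<notin> E' i" unfolding E'_def by auto
      then have "(\<Sum>x\<in>PiE (E i) (\<lambda>_. U). g i x) = (\<Sum>x\<in>PiE (E' i) (\<lambda>_. U). \<Sum>y\<in>U. g i (x(v:=y)))"
        using sum_PiE_insert[of v "E' i" "g i" U] by simp
      then show ?thesis unfolding g'_def using True by simp
    next
      case False
      then have "E' i = E i" unfolding E'_def by auto
      then show ?thesis unfolding g'_def using False by simp
    qed
  qed
  finally show ?case .
qed



definition cop :: "'a set \<Rightarrow> 'b set set \<Rightarrow> 'a set set \<Rightarrow> ('b \<Rightarrow> 'a) set" where
  "cop U H F = {f \<in> PiE (\<Union>H) (\<lambda>_. U). inj_on f (\<Union>H) \<and> (\<forall>e\<in>H. f`e \<in> F)}"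

definition KH :: "'b set set \<Rightarrow> real" where
  "KH H = (\<Sum>e\<in>H. real (card e ^ card e))"

lemma card_maps_into:
  assumes fG: "finite G" and fe: "finite e" and fg: "\<And>g. g\<in>G \<Longrightarrow> finite g"
  shows "card {x\<in>PiE e (\<lambda>_. U). x`e \<in> G} \<le> card e ^ card e * card G"
proof -
  let ?G = "{g\<in>G. card g \<le> card e}"
  have sub: "{x\<in>PiE e (\<lambda>_. U). x`e \<in> G} \<subseteq> (\<Union>g\<in>?G. PiE e (\<lambda>_. g))"
  proof
    fix x assume x: "x \<in> {x\<in>PiE e (\<lambda>_. U). x`e \<in> G}"
    then have "x`e \<in> G" "card (x`e) \<le> card e" using card_image_le[OF fe] by auto
    moreover have "x \<in> PiE e (\<lambda>_. x`e)" using x by (auto simp: PiE_def extensional_def)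
    ultimately show "x \<in> (\<Union>g\<in>?G. PiE e (\<lambda>_. g))" by blast
  qed
  have fin: "finite (\<Union>g\<in>?G. PiE e (\<lambda>_. g))"
    using fG fe fg by (auto intro!: finite_PiE)
  have "card {x\<in>PiE e (\<lambda>_. U). x`e \<in> G} \<le> card (\<Union>g\<in>?G. PiE e (\<lambda>_. g))"
    by (rule card_mono[OF fin sub])
  also have "\<dots> \<le> (\<Sum>g\<in>?G. card (PiE e (\<lambda>_. g)))"
    by (rule card_UN_le) (use fG in simp)
  also have "\<dots> = (\<Sum>g\<in>?G. card g ^ card e)"
    by (rule sum.cong[OF refl]) (simp add: card_PiE fe)
  also have "\<dots> \<le> (\<Sum>g\<in>?G. card e ^ card e)"
    by (rule sum_mono) (simp add: power_mono)
  also have "\<dots> = card ?G * card e ^ card e" by simp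
  also have "\<dots> \<le> card G * card e ^ card e"
    by (rule mult_right_mono) (use fG in \<open>auto intro: card_mono\<close>)
  finally show ?thesis by (simp add: mult.commute)
qed

lemma cop_count:
  fixes H :: "'b set set" and G :: "'a set set"
  assumes hH: "hypergraph H" and Hne: "H \<noteq> {}" and fG: "finite G" and fg: "\<And>g. g\<in>G \<Longrightarrow> finite g"
    and fc: "fractional_cover H \<phi>"
  shows "real (card (cop (\<Union>G) H G)) \<le> KH H powr card H * real (card G) powr (\<Sum>e\<in>H. \<phi> e)"
proof (cases "G = {}")
  case True
  then have "cop (\<Union>G) H G = {}" using Hne unfolding cop_def by auto
  then show ?thesis by simp
next
  case False
  define m where "m = card G"
  have m1: "real m \<ge> 1" using False fG unfolding m_def by (simp add: Suc_le_eq card_gt_0_iff)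
  have fH: "finite H" and fe: "\<And>e. e\<in>H \<Longrightarrow> finite e" and nee: "\<And>e. e\<in>H \<Longrightarrow> e \<noteq> {}"
    using hH unfolding hypergraph_def by auto
  have ph01: "\<And>e. e\<in>H \<Longrightarrow> 0 \<le> \<phi> e \<and> \<phi> e \<le> 1"
    and cov: "\<And>v. v\<in>\<Union>H \<Longrightarrow> (\<Sum>e\<in>{e\<in>H. v \<in> e}. \<phi> e) \<ge> 1"
    using fc unfolding fractional_cover_def hvertices_def by auto
  define U where "U = \<Union>G"
  have fU: "finite U" unfolding U_def using fG fg by auto
  define I where "I = {e\<in>H. \<phi> e > 0}"
  define g where "g e x = (if x`e \<in> G then 1 else 0::real)" for e and x :: "'b \<Rightarrow> 'a"
  have K1: "KH H \<ge> 1"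
  proof -
    obtain e where e: "e\<in>H" using Hne by auto
    have "card e \<ge> 1" using fe[OF e] nee[OF e] by (simp add: Suc_le_eq card_gt_0_iff)
    then have "real (card e ^ card e) \<ge> 1" by simp
    also have "\<dots> \<le> KH H" unfolding KH_def by (rule member_le_sum) (use e fH in auto)
    finally show ?thesis .
  qed
  have fin: "(\<Sum>x\<in>PiE (\<Union>H) (\<lambda>_. U). \<Prod>i\<in>I. g i x powr \<phi> i)
           \<le> (\<Prod>i\<in>I. (\<Sum>x\<in>PiE i (\<lambda>_. U). g i x) powr \<phi> i)"
  proof (rule finner)
    show "finite (\<Union>H)" using fH fe by auto
    show "finite U" by (rule fU)
    show "finite I" unfolding I_def using fH by simp
    show "\<And>i. i \<in> I \<Longrightarrow> i \<subseteq> \<Union>H" unfolding I_def by auto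
    show "\<And>i. i \<in> I \<Longrightarrow> 0 < \<phi> i" unfolding I_def by auto
    show "\<And>i x. i \<in> I \<Longrightarrow> 0 \<le> g i x" unfolding g_def by auto
    show "\<And>i x. i \<in> I \<Longrightarrow> g i x = g i (restrict x i)" unfolding g_def by simp
    fix v assume v: "v \<in> \<Union>H"
    have "(\<Sum>e\<in>{e\<in>H. v \<in> e}. \<phi> e) = (\<Sum>e\<in>{i \<in> I. v \<in> i}. \<phi> e)"
      by (rule sum.mono_neutral_right) (use fH ph01 in \<open>auto simp: I_def order.order_iff_strict\<close>)
    then show "1 \<le> sum \<phi> {i \<in> I. v \<in> i}" using cov[OF v] by simp
  qed
  have "real (card (cop U H G)) = (\<Sum>x\<in>cop U H G. \<Prod>i\<in>I. g i x powr \<phi> i)"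
  proof -
    have "(\<Prod>i\<in>I. g i x powr \<phi> i) = 1" if "x \<in> cop U H G" for x
      using that unfolding cop_def g_def I_def by (auto intro!: prod.neutral)
    then show ?thesis by simp
  qed
  also have "\<dots> \<le> (\<Sum>x\<in>PiE (\<Union>H) (\<lambda>_. U). \<Prod>i\<in>I. g i x powr \<phi> i)"
    by (rule sum_mono2) (use fH fe fU in \<open>auto simp: cop_def intro!: finite_PiE prod_nonneg\<close>)
  also note fin
  also have "(\<Prod>i\<in>I. (\<Sum>x\<in>PiE i (\<lambda>_. U). g i x) powr \<phi> i) \<le> (\<Prod>i\<in>I. (KH H * m) powr \<phi> i)"
  proof (rule prod_mono, intro conjI)
    fix i assume i: "i\<in>I"
    then have iH: "i\<in>H" unfolding I_def by simp
    show "0 \<le> (\<Sum>x\<in>PiE i (\<lambda>_. U). g i x) powr \<phi> i" by simp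
    have "(\<Sum>x\<in>PiE i (\<lambda>_. U). g i x) = real (card {x\<in>PiE i (\<lambda>_. U). x`i \<in> G})"
      unfolding g_def using fe[OF iH] fU by (simp add: sum.inter_filter[symmetric] finite_PiE)
    also have "\<dots> \<le> real (card i ^ card i * card G)"
      by (subst of_nat_le_iff) (rule card_maps_into[OF fG fe[OF iH] fg])
    also have "\<dots> \<le> KH H * m"
    proof -
      have "real (card i ^ card i) \<le> KH H" unfolding KH_def by (rule member_le_sum) (use iH fH in auto)
      then show ?thesis unfolding m_def by (simp add: mult_right_mono)
    qed
    finally have le: "(\<Sum>x\<in>PiE i (\<lambda>_. U). g i x) \<le> KH H * m" .
    show "(\<Sum>x\<in>PiE i (\<lambda>_. U). g i x) powr \<phi> i \<le> (KH H * m) powr \<phi> i"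
      by (rule powr_mono2[OF _ _ le]) (use ph01[OF iH] in \<open>auto simp: g_def intro: sum_nonneg\<close>)
  qed
  also have "\<dots> = (KH H * m) powr (\<Sum>i\<in>I. \<phi> i)"
    by (rule powr_sum[symmetric]) (use K1 m1 in auto)
  also have "(\<Sum>i\<in>I. \<phi> i) = (\<Sum>e\<in>H. \<phi> e)"
    by (rule sum.mono_neutral_left) (use fH ph01 in \<open>auto simp: I_def order.order_iff_strict\<close>)
  also have "(KH H * m) powr (\<Sum>e\<in>H. \<phi> e) = KH H powr (\<Sum>e\<in>H. \<phi> e) * m powr (\<Sum>e\<in>H. \<phi> e)"
    by (rule powr_mult)
  also have "\<dots> \<le> KH H powr card H * m powr (\<Sum>e\<in>H. \<phi> e)"
  proof (rule mult_right_mono)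
    have "(\<Sum>e\<in>H. \<phi> e) \<le> (\<Sum>e\<in>H. 1)" by (rule sum_mono) (use ph01 in auto)
    then show "KH H powr (\<Sum>e\<in>H. \<phi> e) \<le> KH H powr card H" using K1 by (simp add: powr_mono)
  qed simp
  finally show ?thesis unfolding U_def m_def .
qed

lemma KH_ge1:
  assumes hH: "hypergraph H" and Hne: "H \<noteq> {}"
  shows "KH H \<ge> 1"
proof -
  obtain e where e: "e\<in>H" using Hne by auto
  have "finite e" "e \<noteq> {}" "finite H" using hH e unfolding hypergraph_def by auto
  then have "card e \<ge> 1" by (simp add: Suc_le_eq card_gt_0_iff)
  then have "real (card e ^ card e) \<ge> 1" by simp
  also have "\<dots> \<le> KH H" unfolding KH_def by (rule member_le_sum) (use e \<open>finite H\<close> in auto)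
  finally show ?thesis .
qed

lemma one_cover:
  assumes "hypergraph H"
  shows "fractional_cover H (\<lambda>_. 1)"
proof -
  have "(\<Sum>e\<in>{e\<in>H. v \<in> e}. (1::real)) \<ge> 1" if vH: "v \<in> hvertices H" for v
  proof -
    obtain e where "e\<in>H" "v\<in>e" using vH by (auto simp: hvertices_def)
    moreover have "finite H" using assms unfolding hypergraph_def by auto
    ultimately have "card {e\<in>H. v \<in> e} \<ge> 1" by (metis (mono_tags, lifting) One_nat_def Suc_leI card_gt_0_iff empty_iff finite_subset mem_Collect_eq subsetI)
    then show ?thesis by simp
  qed
  then show ?thesis unfolding fractional_cover_def by auto
qed

lemma fcn_facts:
  assumes hH: "hypergraph H"
  shows "{(\<Sum>e\<in>H. \<phi> e) | \<phi>. fractional_cover H \<phi>} \<noteq> {}"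
    and "bdd_below {(\<Sum>e\<in>H. \<phi> e) | \<phi>. fractional_cover H \<phi>}"
proof -
  show "{(\<Sum>e\<in>H. \<phi> e) | \<phi>. fractional_cover H \<phi>} \<noteq> {}" using one_cover[OF hH] by blast
  show "bdd_below {(\<Sum>e\<in>H. \<phi> e) | \<phi>. fractional_cover H \<phi>}"
    by (rule bdd_belowI[of _ 0]) (auto simp: fractional_cover_def intro!: sum_nonneg)
qed

lemma rho_ge1:
  assumes hH: "hypergraph H" and Hne: "H \<noteq> {}"
  shows "frac_cover_number H \<ge> 1"
  unfolding frac_cover_number_def
proof (rule cInf_greatest[OF fcn_facts(1)[OF hH]])
  fix x assume "x \<in> {(\<Sum>e\<in>H. \<phi> e) | \<phi>. fractional_cover H \<phi>}"
  then obtain \<phi> where x: "x = (\<Sum>e\<in>H. \<phi> e)" and fc: "fractional_cover H \<phi>" by blast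
  obtain e where e0: "e\<in>H" using Hne by auto
  then obtain v where "v\<in>e" using hH unfolding hypergraph_def by auto
  note e = e0 this
  have fH: "finite H" using hH unfolding hypergraph_def by auto
  have "1 \<le> (\<Sum>e\<in>{e\<in>H. v \<in> e}. \<phi> e)" using fc e unfolding fractional_cover_def hvertices_def by blast
  also have "\<dots> \<le> (\<Sum>e\<in>H. \<phi> e)"
    by (rule sum_mono2) (use fH fc in \<open>auto simp: fractional_cover_def\<close>)
  finally show "1 \<le> x" using x by simp
qed

lemma cop_count_rho:
  fixes H :: "'b set set" and G :: "'a set set"
  assumes hH: "hypergraph H" and Hne: "H \<noteq> {}" and fG: "finite G" and fg: "\<And>g. g\<in>G \<Longrightarrow> finite g"
  shows "real (card (cop (\<Union>G) H G)) \<le> KH H powr card H * real (card G) powr frac_cover_number H"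
proof -
  define N where "N = real (card (cop (\<Union>G) H G))"
  define A where "A = KH H powr card H"
  define m where "m = real (card G)"
  define r where "r = frac_cover_number H"
  have A0: "A > 0" unfolding A_def using KH_ge1[OF hH Hne] by simp
  have bnd: "N \<le> A * m powr (\<Sum>e\<in>H. \<phi> e)" if "fractional_cover H \<phi>" for \<phi>
    unfolding N_def A_def m_def by (rule cop_count[OF hH Hne fG fg that])
  consider "m = 0" | "m = 1" | "m > 1" unfolding m_def by (cases "card G = 0"; cases "card G = 1") auto
  then have "N \<le> A * m powr r"
  proof cases
    case 1
    then have "G = {}" using fG unfolding m_def by simp
    then have "cop (\<Union>G) H G = {}" using Hne unfolding cop_def by auto
    then show ?thesis unfolding N_def using A0 by simp
  next
    case 2
    then show ?thesis using bnd[OF one_cover[OF hH]] by simp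
  next
    case 3
    show ?thesis
    proof (rule ccontr)
      assume "\<not> N \<le> A * m powr r"
      then have lt: "A * m powr r < N" by simp
      then have Npos: "N > 0" using A0 by (smt (verit) mult_pos_pos powr_gt_zero 3)
      define t where "t = log m (N / A)"
      have mt: "m powr t = N / A" unfolding t_def using 3 Npos A0 by simp
      have "t \<le> r" unfolding r_def frac_cover_number_def
      proof (rule cInf_greatest[OF fcn_facts(1)[OF hH]])
        fix x assume "x \<in> {(\<Sum>e\<in>H. \<phi> e) | \<phi>. fractional_cover H \<phi>}"
        then obtain \<phi> where x: "x = (\<Sum>e\<in>H. \<phi> e)" and fc: "fractional_cover H \<phi>" by blast
        have "m powr t \<le> m powr x" unfolding mt x using bnd[OF fc] A0 by (simp add: divide_le_eq mult.commute)
        then show "t \<le> x" using 3 by simp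
      qed
      then have "m powr t \<le> m powr r" using 3 by simp
      then have "N \<le> A * m powr r" unfolding mt using A0 by (simp add: divide_le_eq mult.commute)
      then show False using lt by simp
    qed
  qed
  then show ?thesis unfolding N_def A_def m_def r_def .
qed



lemma count_super:
  assumes fG: "finite G" and BG: "B \<subseteq> G" and tm: "t \<le> card G"
  shows "card {S. S \<subseteq> G \<and> card S = t \<and> B \<subseteq> S} * (card G choose card B) = (card G choose t) * (t choose card B)"
proof (cases "card B \<le> t")
  case False
  have "{S. S \<subseteq> G \<and> card S = t \<and> B \<subseteq> S} = {}"
  proof (rule ccontr)
    assume "{S. S \<subseteq> G \<and> card S = t \<and> B \<subseteq> S} \<noteq> {}"
    then obtain S where "S \<subseteq> G" "card S = t" "B \<subseteq> S" by blast
    then have "card B \<le> t" using fG by (metis card_mono finite_subset)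
    then show False using False by simp
  qed
  then have "card {S. S \<subseteq> G \<and> card S = t \<and> B \<subseteq> S} = 0" by (simp only: card.empty)
  moreover have "t choose card B = 0" using False by simp
  ultimately show ?thesis by simp
next
  case True
  have fB: "finite B" using fG BG finite_subset by blast
  let ?X = "{X. X \<subseteq> G - B \<and> card X = t - card B}"
  have eq: "{S. S \<subseteq> G \<and> card S = t \<and> B \<subseteq> S} = (\<lambda>X. X \<union> B) ` ?X"
  proof (intro equalityI subsetI)
    fix S assume "S \<in> {S. S \<subseteq> G \<and> card S = t \<and> B \<subseteq> S}"
    then have S: "S \<subseteq> G" "card S = t" "B \<subseteq> S" by auto
    have "S - B \<in> ?X" using S fB by (auto simp: card_Diff_subset)
    moreover have "S = (S - B) \<union> B" using S by auto
    ultimately show "S \<in> (\<lambda>X. X \<union> B) ` ?X" by blast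
  next
    fix S assume "S \<in> (\<lambda>X. X \<union> B) ` ?X"
    then obtain X where X: "X \<subseteq> G - B" "card X = t - card B" "S = X \<union> B" by auto
    have "finite X" using X fG finite_subset by blast
    then have "card S = t" using X fB True by (subst X(3), subst card_Un_disjoint) auto
    then show "S \<in> {S. S \<subseteq> G \<and> card S = t \<and> B \<subseteq> S}" using X BG by auto
  qed
  have inj: "inj_on (\<lambda>X. X \<union> B) ?X" by (rule inj_onI) blast
  have "card {S. S \<subseteq> G \<and> card S = t \<and> B \<subseteq> S} = card ?X" unfolding eq by (rule card_image[OF inj])
  also have "\<dots> = card (G - B) choose (t - card B)" by (rule n_subsets) (use fG in simp)
  also have "card (G - B) = card G - card B" using BG fB by (simp add: card_Diff_subset)
  finally have c: "card {S. S \<subseteq> G \<and> card S = t \<and> B \<subseteq> S} = (card G - card B) choose (t - card B)" .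
  show ?thesis unfolding c using choose_mult[OF True tm] by (simp add: mult.commute)
qed

lemma cop_finite:
  assumes "finite (\<Union>H)" "finite U"
  shows "finite (cop U H F)"
proof -
  have "cop U H F \<subseteq> PiE (\<Union>H) (\<lambda>_. U)" unfolding cop_def by auto
  moreover have "finite (PiE (\<Union>H) (\<lambda>_. U))" using assms by (simp add: finite_PiE)
  ultimately show ?thesis by (rule finite_subset)
qed

lemma cop_sub:
  assumes "S \<subseteq> G"
  shows "cop U H S = {f \<in> cop U H G. (\<lambda>e. f`e)`H \<subseteq> S}"
  using assms unfolding cop_def by auto

lemma cop_img_card:
  assumes "f \<in> cop U H G"
  shows "card ((\<lambda>e. f`e)`H) = card H"
proof (rule card_image, rule inj_onI)
  fix e e' assume "e\<in>H" "e'\<in>H" "f`e = f`e'"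
  moreover have "inj_on f (\<Union>H)" using assms unfolding cop_def by auto
  ultimately show "e = e'" by (meson Union_upper inj_on_image_eq_iff)
qed

lemma avg_exists:
  fixes H :: "'b set set" and G :: "'a set set"
  assumes hH: "hypergraph H" and fG: "finite G" and fg: "\<And>g. g\<in>G \<Longrightarrow> finite g"
    and tm: "t \<le> card G"
  shows "\<exists>S. S \<subseteq> G \<and> card S = t \<and>
     card (cop (\<Union>G) H S) * (card G choose card H) \<le> card (cop (\<Union>G) H G) * (t choose card H)"
proof (rule ccontr)
  assume contra: "\<not> ?thesis"
  define U where "U = \<Union>G"
  define T where "T = {S. S \<subseteq> G \<and> card S = t}"
  define C where "C = cop U H G"
  have fU: "finite U" unfolding U_def using fG fg by auto
  have fH: "finite (\<Union>H)" using hH unfolding hypergraph_def by auto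
  have fC: "finite C" unfolding C_def by (rule cop_finite[OF fH fU])
  have fT: "finite T" unfolding T_def using fG by simp
  have cT: "card T = card G choose t" unfolding T_def by (rule n_subsets[OF fG])
  have Tne: "T \<noteq> {}" using cT tm by (metis card.empty zero_less_binomial less_irrefl)
  have lt: "card C * (t choose card H) < card (cop U H S) * (card G choose card H)" if "S \<in> T" for S
    using contra that unfolding T_def C_def U_def by auto
  have "(\<Sum>S\<in>T. card C * (t choose card H)) < (\<Sum>S\<in>T. card (cop U H S) * (card G choose card H))"
    by (rule sum_strict_mono[OF fT Tne lt])
  also have "(\<Sum>S\<in>T. card (cop U H S) * (card G choose card H))
      = (\<Sum>S\<in>T. (\<Sum>f\<in>C. if (\<lambda>e. f`e)`H \<subseteq> S then 1 else 0) * (card G choose card H))"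
  proof (rule sum.cong[OF refl])
    fix S assume "S\<in>T"
    then have "cop U H S = {f\<in>C. (\<lambda>e. f`e)`H \<subseteq> S}" unfolding C_def T_def by (simp add: cop_sub)
    then show "card (cop U H S) * (card G choose card H) = (\<Sum>f\<in>C. if (\<lambda>e. f`e)`H \<subseteq> S then 1 else 0) * (card G choose card H)"
      using fC by (simp add: sum.inter_filter[symmetric])
  qed
  also have "\<dots> = (\<Sum>f\<in>C. card {S\<in>T. (\<lambda>e. f`e)`H \<subseteq> S} * (card G choose card H))"
  proof -
    have "(\<Sum>S\<in>T. \<Sum>f\<in>C. if (\<lambda>e. f`e)`H \<subseteq> S then 1 else 0) = (\<Sum>f\<in>C. \<Sum>S\<in>T. if (\<lambda>e. f`e)`H \<subseteq> S then 1 else (0::nat))"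
      by (rule sum.swap)
    also have "\<dots> = (\<Sum>f\<in>C. card {S\<in>T. (\<lambda>e. f`e)`H \<subseteq> S})"
      by (rule sum.cong[OF refl]) (simp add: sum.inter_filter[OF fT, symmetric])
    finally show ?thesis by (simp add: sum_distrib_right[symmetric])
  qed
  also have "\<dots> = (\<Sum>f\<in>C. (card G choose t) * (t choose card H))"
  proof (rule sum.cong[OF refl])
    fix f assume f: "f \<in> C"
    have BG: "(\<lambda>e. f`e)`H \<subseteq> G" using f unfolding C_def cop_def by auto
    have "{S\<in>T. (\<lambda>e. f`e)`H \<subseteq> S} = {S. S \<subseteq> G \<and> card S = t \<and> (\<lambda>e. f`e)`H \<subseteq> S}" unfolding T_def by auto
    then show "card {S\<in>T. (\<lambda>e. f`e)`H \<subseteq> S} * (card G choose card H) = (card G choose t) * (t choose card H)"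
      using count_super[OF fG BG tm] cop_img_card[of f U H G] f unfolding C_def by simp
  qed
  also have "\<dots> = (\<Sum>S\<in>T. card C * (t choose card H))" using cT by (simp add: mult.commute)
  finally show False by simp
qed

lemma ex_hyp_ge:
  assumes fG: "finite G" and FG: "F \<subseteq> G" and nc: "\<not> has_copy H F"
  shows "card F \<le> ex_hyp G H"
  unfolding ex_hyp_def
proof (rule Max_ge)
  have "{card F | F. F \<subseteq> G \<and> \<not> has_copy H F} \<subseteq> card ` Pow G" by auto
  then show "finite {card F | F. F \<subseteq> G \<and> \<not> has_copy H F}" using fG by (meson finite_Pow_iff finite_imageI finite_subset)
  show "card F \<in> {card F | F. F \<subseteq> G \<and> \<not> has_copy H F}" using FG nc by blast
qed

lemma ex_lower:
  fixes H :: "'b set set" and G :: "'a set set"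
  assumes Hne: "H \<noteq> {}" and fG: "finite G" and SG: "S \<subseteq> G"
    and hH: "hypergraph H" and fg: "\<And>g. g\<in>G \<Longrightarrow> finite g"
  shows "card S - card (cop (\<Union>G) H S) \<le> ex_hyp G H"
proof -
  obtain e0 where e0: "e0 \<in> H" using Hne by auto
  define R where "R = (\<lambda>f. f`e0) ` cop (\<Union>G) H S"
  define T where "T = S - R"
  have fS: "finite S" using fG SG finite_subset by blast
  have nc: "\<not> has_copy H T"
  proof
    assume "has_copy H T"
    then obtain f where inj: "inj_on f (hvertices H)" and im: "\<forall>e\<in>H. f ` e \<in> T"
      unfolding has_copy_def by blast
    define f' where "f' = restrict f (\<Union>H)"
    have img: "f' ` e = f ` e" if "e \<in> H" for e using that unfolding f'_def by auto
    have "f' \<in> cop (\<Union>G) H S"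
      unfolding cop_def
    proof (intro CollectI conjI ballI)
      show "f' \<in> PiE (\<Union>H) (\<lambda>_. \<Union>G)"
      proof (rule PiE_I)
        fix v assume "v \<in> \<Union>H"
        then obtain e where "e\<in>H" "v\<in>e" by auto
        then have "f v \<in> f`e" "f`e \<in> G" using im SG unfolding T_def by auto
        then show "f' v \<in> \<Union>G" unfolding f'_def using \<open>v \<in> \<Union>H\<close> by auto
      next
        fix v assume "v \<notin> \<Union>H" then show "f' v = undefined" unfolding f'_def by simp
      qed
      show "inj_on f' (\<Union>H)" using inj unfolding f'_def hvertices_def by (simp add: inj_on_def)
      fix e assume "e\<in>H"
      then show "f' ` e \<in> S" using img im unfolding T_def by auto
    qed
    then have "f ` e0 \<in> R" unfolding R_def using img[OF e0] by force
    moreover have "f ` e0 \<in> T" using im e0 by auto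
    ultimately show False unfolding T_def by auto
  qed
  have fc: "finite (cop (\<Union>G) H S)"
  proof -
    have "finite (\<Union>H)" using hH unfolding hypergraph_def by auto
    moreover have "finite (\<Union>G)" using fG fg by auto
    ultimately show "finite (cop (\<Union>G) H S)" by (rule cop_finite)
  qed
  have "card S - card (cop (\<Union>G) H S) \<le> card S - card R"
    unfolding R_def using fc by (simp add: card_image_le diff_le_mono2)
  also have "\<dots> \<le> card T" unfolding T_def by (rule diff_card_le_card_Diff) (use fc R_def in simp)
  also have "\<dots> \<le> ex_hyp G H" by (rule ex_hyp_ge[OF fG _ nc]) (use SG T_def in auto)
  finally show ?thesis .
qed



lemma real_core:
  fixes m t L r :: real and n :: nat
  assumes m1: "m \<ge> 1" and L1: "L \<ge> 1" and n1: "n \<ge> 1" and t0: "0 \<le> t"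
    and tx: "t \<le> m powr ((real n + 1 - r) / n) / (2*L) powr (1 / n)"
  shows "L * t^(n+1) * m powr (r - (real n + 1)) \<le> t/2"
proof -
  define D where "D = (2*L) powr (1/n)"
  have Dpos: "D > 0" unfolding D_def using L1 by simp
  have Dn: "D ^ n = 2*L" unfolding D_def using L1 n1 by (simp add: powr_power)
  have "t ^ n \<le> (m powr ((real n + 1 - r) / n) / D) ^ n"
    by (rule power_mono) (use tx t0 D_def in auto)
  also have "\<dots> = m powr (real n + 1 - r) / (2*L)"
    using m1 n1 Dn by (simp add: power_divide powr_power)
  finally have tn: "t ^ n \<le> m powr (real n + 1 - r) / (2*L)" .
  have "L * t^(n+1) * m powr (r - (real n + 1)) = t * (L * t^n * m powr (r - (real n + 1)))"
    by (simp add: algebra_simps)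
  also have "\<dots> \<le> t * (L * (m powr (real n + 1 - r) / (2*L)) * m powr (r - (real n + 1)))"
    using tn L1 t0 by (intro mult_left_mono mult_right_mono) auto
  also have "L * (m powr (real n + 1 - r) / (2*L)) * m powr (r - (real n + 1)) = 1/2"
  proof -
    have "m powr (real n + 1 - r) * m powr (r - (real n + 1)) = 1"
      using m1 by (simp add: powr_add[symmetric])
    then show ?thesis using L1 by (simp add: field_simps)
  qed
  finally show ?thesis by simp
qed

lemma key:
  fixes H :: "'b set set" and G :: "'a set set"
  assumes hH: "hypergraph H" and Hne: "H \<noteq> {}" and fG: "finite G" and fg: "\<And>g. g\<in>G \<Longrightarrow> finite g"
    and rs: "frac_cover_number H < real (card H)"
  shows "(real (card G) powr ((real (card H - 1) + 1 - frac_cover_number H) / real (card H - 1))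
           / (2 * (KH H powr card H * real (card H) ^ card H)) powr (1 / real (card H - 1)) - 1) / 2
         \<le> real (ex_hyp G H)"
proof -
  define n where "n = card H - 1"
  define r where "r = frac_cover_number H"
  define L where "L = KH H powr card H * real (card H) ^ card H"
  define m where "m = real (card G)"
  define \<alpha> where "\<alpha> = (real n + 1 - r) / real n"
  define D where "D = (2*L) powr (1 / real n)"
  define x where "x = m powr \<alpha> / D"
  define N where "N = card (cop (\<Union>G) H G)"
  have r1: "r \<ge> 1" unfolding r_def by (rule rho_ge1[OF hH Hne])
  have s2: "card H \<ge> 2" using rs r1 unfolding r_def by linarith
  have n1: "n \<ge> 1" and sn: "real (card H) = real n + 1" "card H = n + 1" unfolding n_def using s2 by auto
  have K1: "KH H \<ge> 1" by (rule KH_ge1[OF hH Hne])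
  have L1: "L \<ge> 1"
  proof -
    have "KH H powr card H \<ge> 1" using K1 by (simp add: ge_one_powr_ge_zero)
    moreover have "real (card H) ^ card H \<ge> 1" using s2 by simp
    ultimately have "1*1 \<le> KH H powr card H * real (card H) ^ card H" by (intro mult_mono) auto
    then show ?thesis unfolding L_def by simp
  qed
  have D1: "D \<ge> 1" unfolding D_def using L1 by (simp add: ge_one_powr_ge_zero)
  have a01: "0 \<le> \<alpha>" "\<alpha> \<le> 1" 
  proof -
    have np: "real n > 0" using n1 by simp
    have "real n + 1 - r \<ge> 0" "real n + 1 - r \<le> real n" using rs r1 sn unfolding r_def by linarith+
    then show "0 \<le> \<alpha>" "\<alpha> \<le> 1" unfolding \<alpha>_def using np by (simp_all add: divide_le_eq)
  qed
  have m0: "m \<ge> 0" unfolding m_def by simp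
  have xm: "x \<le> m"
  proof (cases "card G = 0")
    case True then show ?thesis unfolding x_def m_def by simp
  next
    case False
    then have m1: "m \<ge> 1" unfolding m_def by simp
    have "m powr \<alpha> \<le> m powr 1" by (rule powr_mono) (use m1 a01 in auto)
    also have "\<dots> = m" using m0 by simp
    finally have "m powr \<alpha> \<le> m" .
    moreover have "m powr \<alpha> / D \<le> m powr \<alpha>" using D1 by (simp add: divide_le_eq mult_le_cancel_left1)
    ultimately show ?thesis unfolding x_def by linarith
  qed
  have x0: "x \<ge> 0" unfolding x_def using D1 by simp
  have goal: "(x - 1) / 2 \<le> real (ex_hyp G H)"
  proof (cases "N = 0")
    case True
    have "card G - card (cop (\<Union>G) H G) \<le> ex_hyp G H" by (rule ex_lower[OF Hne fG subset_refl hH fg])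
    then have "m \<le> real (ex_hyp G H)" using True unfolding N_def m_def by simp
    then show ?thesis using xm by simp
  next
    case False
    then obtain f where f: "f \<in> cop (\<Union>G) H G" unfolding N_def by (metis card.empty ex_in_conv)
    have "card H \<le> card G"
    proof -
      have "(\<lambda>e. f`e)`H \<subseteq> G" using f unfolding cop_def by auto
      then have "card ((\<lambda>e. f`e)`H) \<le> card G" using fG by (rule card_mono[rotated])
      then show ?thesis using cop_img_card[OF f] by simp
    qed
    then have msn: "m \<ge> real n + 1" unfolding m_def using sn by simp
    then have m1: "m \<ge> 1" by simp
    define t where "t = nat \<lfloor>x\<rfloor>"
    have tx: "real t \<le> x" unfolding t_def using x0 by simp
    have tx2: "real t > x - 1" unfolding t_def using x0 by linarith
    have tm: "t \<le> card G" using tx xm unfolding m_def by linarith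
    obtain S where S: "S \<subseteq> G" "card S = t"
      and avg: "card (cop (\<Union>G) H S) * (card G choose card H) \<le> N * (t choose card H)"
      using avg_exists[OF hH fG fg tm] unfolding N_def by blast
    define NS where "NS = real (card (cop (\<Union>G) H S))"
    have Cm: "real (card G choose card H) \<ge> (m / real (card H)) ^ card H"
      unfolding m_def using binomial_ge_n_over_k_pow_k[OF \<open>card H \<le> card G\<close>] by simp
    have Cmpos: "(m / real (card H)) ^ card H > 0" using m1 s2 by simp
    have Ct: "real (t choose card H) \<le> real t ^ card H"
    proof (cases "card H \<le> t")
      case True then show ?thesis using binomial_le_pow[OF True] by (simp only: of_nat_power[symmetric] of_nat_le_iff)
    next
      case False then have "t choose card H = 0" by simp
      then show ?thesis by (simp del: binomial_eq_0_iff)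
    qed
    have Nb: "real N \<le> KH H powr card H * m powr r"
      unfolding N_def m_def r_def by (rule cop_count_rho[OF hH Hne fG fg])
    have "NS * (m / real (card H)) ^ card H \<le> NS * real (card G choose card H)"
      by (rule mult_left_mono[OF Cm]) (simp add: NS_def)
    also have "\<dots> \<le> real N * real (t choose card H)" unfolding NS_def using avg
      by (simp only: of_nat_mult[symmetric] of_nat_le_iff)
    also have "\<dots> \<le> (KH H powr card H * m powr r) * real t ^ card H"
      by (rule mult_mono[OF Nb Ct]) auto
    finally have "NS \<le> (KH H powr card H * m powr r) * real t ^ card H / (m / real (card H)) ^ card H"
      using Cmpos by (simp add: le_divide_eq)
    also have "\<dots> = L * real t ^ (n+1) * m powr (r - (real n + 1))"
    proof -
      have "m ^ card H = m powr (real n + 1)"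
        by (subst sn(1)[symmetric], rule powr_realpow[symmetric]) (use m1 in simp)
      then have "m powr r / m ^ card H = m powr (r - (real n + 1))" by (simp add: powr_diff)
      moreover have "(KH H powr card H * m powr r) * real t ^ card H / (m / real (card H)) ^ card H
          = L * real t ^ card H * (m powr r / m ^ card H)"
        unfolding L_def using s2 m1 by (simp add: power_divide)
      ultimately show ?thesis using sn(2) by simp
    qed
    also have "\<dots> \<le> real t / 2"
      by (rule real_core[OF m1 L1 n1]) (use tx x_def \<alpha>_def D_def in auto)
    finally have NSt: "NS \<le> real t / 2" .
    have "card S - card (cop (\<Union>G) H S) \<le> ex_hyp G H" by (rule ex_lower[OF Hne fG S(1) hH fg])
    then have "real t - NS \<le> real (ex_hyp G H)" unfolding NS_def using S(2) by linarith
    then have h1: "real t / 2 \<le> real (ex_hyp G H)" using NSt by linarith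
    have h2: "(x - 1) / 2 < real t / 2" using tx2 by (simp add: divide_strict_right_mono)
    show ?thesis using h1 h2 by linarith
  qed
  then show ?thesis unfolding x_def \<alpha>_def D_def L_def n_def r_def m_def .
qed



theorem proposition2p8:
  fixes H :: "'b set set"
  assumes "hypergraph H"
    and "frac_cover_number H < real (card H)"
  shows "\<exists>c::real. \<forall>k::nat. k > 0 \<longrightarrow>
           extremal_E H k \<le> ereal (c * real k powr
             ((real (card H) - 1) / (real (card H) - frac_cover_number H)))"
proof -
  note hH = assms(1) and rs = assms(2)
  have Hne: "H \<noteq> {}"
  proof
    assume H0: "H = {}"
    have "{(\<Sum>e\<in>H. \<phi> e) | \<phi>. fractional_cover H \<phi>} = {0}"
      using one_cover[OF hH] H0 by auto
    then have "frac_cover_number H = 0" unfolding frac_cover_number_def by simp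
    then show False using rs H0 by simp
  qed
  define r where "r = frac_cover_number H"
  define n where "n = card H - 1"
  define L where "L = KH H powr card H * real (card H) ^ card H"
  define \<alpha> where "\<alpha> = (real n + 1 - r) / real n"
  define D where "D = (2 * L) powr (1 / real n)"
  define \<beta> where "\<beta> = (real (card H) - 1) / (real (card H) - r)"
  have r1: "r \<ge> 1" unfolding r_def by (rule rho_ge1[OF hH Hne])
  have s2: "card H \<ge> 2" using rs r1 unfolding r_def by linarith
  have sn: "real (card H) = real n + 1" unfolding n_def using s2 by auto
  have n1: "real n \<ge> 1" unfolding n_def using s2 by auto
  have rlt: "r < real n + 1" using rs sn unfolding r_def by simp
  have apos: "\<alpha> > 0" unfolding \<alpha>_def using rlt n1 by simp
  have ab: "\<alpha> * \<beta> = 1"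
  proof -
    have p1: "real n + 1 - r \<noteq> 0" "real n \<noteq> 0" using rlt n1 by auto
    have "\<beta> = real n / (real n + 1 - r)" unfolding \<beta>_def sn by simp
    then show ?thesis unfolding \<alpha>_def using p1 by simp
  qed
  have bpos: "\<beta> > 0" unfolding \<beta>_def sn using rlt n1 by simp
  have Dpos: "D > 0" unfolding D_def using KH_ge1[OF hH Hne] s2 L_def
    by (simp add: powr_gt_zero)
  define c where "c = (2 * D) powr \<beta>"
  show ?thesis
  proof (intro exI allI impI)
    fix k :: nat assume "k > 0"
    show "extremal_E H k \<le> ereal (c * real k powr ((real (card H) - 1) / (real (card H) - frac_cover_number H)))"
      unfolding extremal_E_def
    proof (rule Sup_least)
      fix y assume "y \<in> {ereal (real (card G)) | G :: nat set set. hypergraph G \<and> ex_hyp G H < k}"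
      then obtain G :: "nat set set" where y: "y = ereal (real (card G))" and hG: "hypergraph G"
        and ek: "ex_hyp G H < k" by blast
      have fG: "finite G" and fg: "\<And>g. g\<in>G \<Longrightarrow> finite g" using hG unfolding hypergraph_def by auto
      define m where "m = real (card G)"
      have m0: "m \<ge> 0" unfolding m_def by simp
      have kk: "(m powr \<alpha> / D - 1) / 2 \<le> real (ex_hyp G H)"
        using key[OF hH Hne fG fg rs] unfolding m_def \<alpha>_def D_def L_def n_def r_def .
      have "real (ex_hyp G H) \<le> real k - 1" using ek by linarith
      moreover have "m powr \<alpha> / D - 1 \<le> 2 * real (ex_hyp G H)" using kk by simp
      ultimately have "m powr \<alpha> / D \<le> 2 * real k" by linarith
      then have ma: "m powr \<alpha> \<le> 2 * D * real k" using Dpos by (simp add: divide_le_eq mult.commute mult.left_commute)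
      have "m = (m powr \<alpha>) powr \<beta>" using m0 ab by (simp add: powr_powr)
      also have "\<dots> \<le> (2 * D * real k) powr \<beta>"
        by (rule powr_mono2) (use bpos ma in auto)
      also have "\<dots> = c * real k powr \<beta>" unfolding c_def by (simp add: powr_mult)
      finally show "y \<le> ereal (c * real k powr ((real (card H) - 1) / (real (card H) - frac_cover_number H)))"
        unfolding y m_def \<beta>_def r_def by simp
    qed
  qed
qed

end
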